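(* Let $c$ be a positive integer and let $\nu$ be the smallest positive integer that does not divide $c$. There exists $N(c)$ such that for every integer $n>N(c)$, $\mathrm{mup}(n+\nu,c)=\mathrm{mup}(n,c)+1$.
   Context: A unique partition of positive integers $A$ and $B$ consists of positive integers $A_1,\dots,A_a$ with $\sum_i A_i=A$ and $B_1,\dots,B_b$ with $\sum_j B_j=B$ such that, viewing these as $a+b$ indexed items, the only subsets of the items whose sum equals $A$ are the set of items $\{A_1,\dots,A_a\}$ and, in case $A=B$, also its complement. $\mathrm{mup}(A,B)$ is the maximum of $a+b$ over all unique partitions of $A$ and $B$ (with $\mathrm{mup}(1,1)=2$). *)

theory Defs
  imports Main
begin

text \<open>A unique partition of A and B: lists xs (parts of A) and ys (parts of B) of positive
integers; the a+b items are the entries of xs @ ys indexed by positions; the only index sets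
whose item-sum equals A are the positions of xs and, if A = B, also the complementary positions.\<close>

definition unique_partition :: "nat \<Rightarrow> nat \<Rightarrow> nat list \<Rightarrow> nat list \<Rightarrow> bool" where
  "unique_partition A B xs ys \<longleftrightarrow>
     (\<forall>x\<in>set xs. 0 < x) \<and> (\<forall>y\<in>set ys. 0 < y) \<and>
     sum_list xs = A \<and> sum_list ys = B \<and>
     (\<forall>S \<subseteq> {..<length xs + length ys}.
        (\<Sum>i\<in>S. (xs @ ys) ! i) = A \<longleftrightarrow>
        (S = {..<length xs} \<or> (A = B \<and> S = {length xs..<length xs + length ys})))"

definition mup :: "nat \<Rightarrow> nat \<Rightarrow> nat" where
  "mup A B = Max {length xs + length ys | xs ys. unique_partition A B xs ys}"

end

theory Submission
  imports Defs
begin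

definition gs :: "nat list \<Rightarrow> nat set \<Rightarrow> nat" where
  "gs L S = (\<Sum>i\<in>S. L ! i)"

lemma gs_all: "gs L {..<length L} = sum_list L"
  by (simp add: gs_def sum_list_sum_nth atLeast0LessThan)

lemma gs_prefix: "gs (xs @ ys) {..<length xs} = sum_list xs"
proof -
  have "gs (xs @ ys) {..<length xs} = (\<Sum>i<length xs. xs ! i)"
    unfolding gs_def by (rule sum.cong) (auto simp: nth_append)
  then show ?thesis by (simp add: sum_list_sum_nth atLeast0LessThan)
qed

lemma gs_diff: "S \<subseteq> {..<m} \<Longrightarrow> gs L ({..<m} - S) = gs L {..<m} - gs L S"
  unfolding gs_def by (rule sum_diff_nat) (auto intro: finite_subset)

lemma gs_mono: "S \<subseteq> T \<Longrightarrow> finite T \<Longrightarrow> gs L S \<le> gs L T"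
  unfolding gs_def by (rule sum_mono2) auto

definition UPc :: "nat \<Rightarrow> nat \<Rightarrow> nat list \<Rightarrow> nat list \<Rightarrow> bool" where
 "UPc n c xs ys \<longleftrightarrow> (\<forall>x\<in>set xs. 0 < x) \<and> (\<forall>y\<in>set ys. 0 < y) \<and> sum_list xs = n \<and> sum_list ys = c \<and>
   (\<forall>S \<subseteq> {..<length xs + length ys}. gs (xs@ys) S = c \<longrightarrow> S = {length xs..<length xs + length ys})"

lemma UP_iff:
  assumes "n \<noteq> c"
  shows "unique_partition n c xs ys \<longleftrightarrow> UPc n c xs ys"
proof -
  let ?a = "length xs" and ?m = "length xs + length ys" and ?L = "xs @ ys"
  have tot: "gs ?L {..<?m} = sum_list xs + sum_list ys"
    using gs_all[of ?L] by simp
  have pre: "gs ?L {..<?a} = sum_list xs" by (rule gs_prefix)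
  have cmp: "{..<?m} - ({..<?m} - S) = S" if "S \<subseteq> {..<?m}" for S using that by auto
  show ?thesis
  proof
    assume U: "unique_partition n c xs ys"
    show "UPc n c xs ys"
      unfolding UPc_def
    proof (intro conjI allI impI)
      fix S assume S: "S \<subseteq> {..<?m}" "gs ?L S = c"
      have "gs ?L S \<le> gs ?L {..<?m}" using S by (intro gs_mono) auto
      have "gs ?L ({..<?m} - S) = n"
        using gs_diff[OF S(1), of ?L] tot S U by (simp add: unique_partition_def)
      then have "{..<?m} - S = {..<?a}"
        using U assms unfolding unique_partition_def gs_def by auto
      then have "S = {..<?m} - {..<?a}" using cmp[OF S(1)] by simp
      then show "S = {?a..<?m}" by auto
    qed (use U in \<open>auto simp: unique_partition_def\<close>)
  next
    assume U: "UPc n c xs ys"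
    show "unique_partition n c xs ys"
      unfolding unique_partition_def
    proof (intro conjI allI impI)
      fix S assume S: "S \<subseteq> {..<?m}"
      show "((\<Sum>i\<in>S. ?L ! i) = n) = (S = {..<?a} \<or> n = c \<and> S = {?a..<?m})"
      proof
        assume "(\<Sum>i\<in>S. ?L ! i) = n"
        then have "gs ?L S = n" by (simp add: gs_def)
        then have "gs ?L ({..<?m} - S) = c"
          using gs_diff[OF S(1), of ?L] tot U by (simp add: UPc_def)
        then have "{..<?m} - S = {?a..<?m}" using U S by (simp add: UPc_def)
        then have "S = {..<?m} - {?a..<?m}" using cmp[OF S(1)] by simp
        then show "S = {..<?a} \<or> n = c \<and> S = {?a..<?m}" by auto
      next
        assume "S = {..<?a} \<or> n = c \<and> S = {?a..<?m}"
        then have "S = {..<?a}" using assms by auto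
        then show "(\<Sum>i\<in>S. ?L ! i) = n" using pre U by (simp add: gs_def UPc_def)
      qed
    qed (use U in \<open>auto simp: UPc_def\<close>)
  qed
qed


lemma len_le: "(\<forall>x\<in>set xs. 0 < (x::nat)) \<Longrightarrow> length xs \<le> sum_list xs"
  by (induction xs) auto

lemma gs_const: "(\<And>i. i \<in> T \<Longrightarrow> L ! i = d) \<Longrightarrow> gs L T = d * card T"
  unfolding gs_def by (simp add: sum.cong[of T T _ "\<lambda>_. d"] mult.commute)

lemma no_sub_c:
  assumes U: "UPc n c xs ys" and T: "T \<subseteq> {..<length xs}" "T \<noteq> {}" "gs (xs @ ys) T = c"
  shows False
proof -
  have "T \<subseteq> {..<length xs + length ys}" using T by auto
  then have "T = {length xs..<length xs + length ys}" using U T unfolding UPc_def by blast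
  moreover obtain t where "t \<in> T" using T by auto
  ultimately show False using T by auto
qed

lemma small_count:
  assumes U: "UPc n c xs ys" and c: "0 < c" and dv: "\<And>d. 0 < d \<Longrightarrow> d < v \<Longrightarrow> d dvd c"
  shows "card {i. i < length xs \<and> xs ! i < v} \<le> v * c"
proof -
  let ?A = "\<lambda>d. {i. i < length xs \<and> xs ! i = d}"
  have each: "card (?A d) \<le> c" if d: "0 < d" "d < v" for d
  proof (rule ccontr)
    assume "\<not> card (?A d) \<le> c"
    then have "c div d \<le> card (?A d)" by (meson div_le_dividend le_trans nat_le_linear)
    then obtain T where T: "T \<subseteq> ?A d" "card T = c div d" "finite T"
      by (rule obtain_subset_with_card_n)
    have dd: "d dvd c" using dv d by auto
    then have "d \<le> c" using c by (simp add: dvd_imp_le)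
    then have "c div d > 0" using d by (simp add: div_greater_zero_iff)
    then have "T \<noteq> {}" using T by auto
    moreover have "gs (xs @ ys) T = c"
    proof -
      have "gs (xs @ ys) T = d * card T"
        by (rule gs_const) (use T in \<open>auto simp: nth_append\<close>)
      then show ?thesis using T dd by simp
    qed
    moreover have "T \<subseteq> {..<length xs}" using T by auto
    ultimately show False using no_sub_c[OF U] by blast
  qed
  have pos: "\<forall>x\<in>set xs. 0 < x" using U by (simp add: UPc_def)
  have "{i. i < length xs \<and> xs ! i < v} \<subseteq> (\<Union>d\<in>{1..<v}. ?A d)"
  proof
    fix i assume "i \<in> {i. i < length xs \<and> xs ! i < v}"
    then have "i < length xs" "xs ! i < v" by auto
    moreover have "0 < xs ! i" using pos \<open>i < length xs\<close> by auto
    ultimately show "i \<in> (\<Union>d\<in>{1..<v}. ?A d)" by auto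
  qed
  then have "card {i. i < length xs \<and> xs ! i < v} \<le> card (\<Union>d\<in>{1..<v}. ?A d)"
    by (intro card_mono) auto
  also have "\<dots> \<le> (\<Sum>d\<in>{1..<v}. card (?A d))" by (rule card_UN_le) simp
  also have "\<dots> \<le> card {1..<v} * c" using sum_bounded_above[of "{1..<v}" "\<lambda>d. card (?A d)" c] each
    by simp
  also have "\<dots> \<le> v * c" by simp
  finally show ?thesis .
qed


lemma gs_Suc: "gs (v # L) (Suc ` S) = gs L S"
  unfolding gs_def by (simp add: sum.reindex)

lemma add_lemma:
  assumes U: "UPc n c xs ys" and v: "0 < v"
    and cnt: "c \<le> card {i. i < length xs \<and> xs ! i = v}"
  shows "UPc (n + v) c (v # xs) ys"
proof -
  let ?a = "length xs" and ?m = "length xs + length ys" and ?L = "xs @ ys"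
  let ?I = "{i. i < length xs \<and> xs ! i = v}"
  have Uc: "\<And>S. S \<subseteq> {..<?m} \<Longrightarrow> gs ?L S = c \<Longrightarrow> S = {?a..<?m}"
    using U unfolding UPc_def by blast
  have main: "S' = {Suc ?a..<Suc ?m}" if S': "S' \<subseteq> {..<Suc ?m}" "gs (v # ?L) S' = c" for S'
  proof -
    define S where "S = {i. Suc i \<in> S'}"
    have Ssub: "S \<subseteq> {..<?m}" using S' by (auto simp: S_def)
    have img: "Suc ` S = S' - {0}"
    proof
      show "Suc ` S \<subseteq> S' - {0}" by (auto simp: S_def)
      show "S' - {0} \<subseteq> Suc ` S"
      proof
        fix x assume x: "x \<in> S' - {0}"
        then have "x = Suc (x - 1)" by simp
        moreover have "x - 1 \<in> S" using x by (simp add: S_def)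
        ultimately show "x \<in> Suc ` S" by blast
      qed
    qed
    show ?thesis
    proof (cases "0 \<in> S'")
      case True
      then have "S' = insert 0 (Suc ` S)" using img by auto
      then have "gs (v # ?L) S' = v + gs ?L S"
      proof -
        have "finite (Suc ` S)" using finite_subset[OF Ssub] by blast
        moreover have "0 \<notin> Suc ` S" by auto
        ultimately have "gs (v # ?L) (insert 0 (Suc ` S)) = (v # ?L) ! 0 + gs (v # ?L) (Suc ` S)"
          unfolding gs_def by (rule sum.insert)
        then show ?thesis using \<open>S' = insert 0 (Suc ` S)\<close> gs_Suc[of v ?L S] by simp
      qed
      then have gS: "gs ?L S + v = c" using S' by simp
      have "\<not> ?I \<subseteq> S"
      proof
        assume "?I \<subseteq> S"
        then have "gs ?L ?I \<le> gs ?L S" using Ssub by (intro gs_mono) (auto intro: finite_subset)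
        moreover have "gs ?L ?I = v * card ?I" by (rule gs_const) (auto simp: nth_append)
        moreover have "v * card ?I \<ge> c"
        proof -
          have "card ?I \<le> v * card ?I" using v by simp
          then show ?thesis using cnt by linarith
        qed
        ultimately show False using gS v by linarith
      qed
      then obtain i where i: "i < ?a" "xs ! i = v" "i \<notin> S" by auto
      have "gs ?L (insert i S) = ?L ! i + gs ?L S"
        unfolding gs_def using i Ssub by (subst sum.insert) (auto intro: finite_subset)
      then have "gs ?L (insert i S) = c" using i gS by (simp add: nth_append)
      moreover have "insert i S \<subseteq> {..<?m}" using Ssub i by auto
      ultimately have "insert i S = {?a..<?m}" using Uc by blast
      then have "i \<in> {?a..<?m}" by blast
      then show ?thesis using i by simp
    next
      case False
      then have "S' = Suc ` S" using img by auto
      then have "gs ?L S = c" using S' gs_Suc[of v ?L S] by simp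
      then have "S = {?a..<?m}" using Uc Ssub by blast
      then show ?thesis using \<open>S' = Suc ` S\<close> by simp
    qed
  qed
  show ?thesis
    unfolding UPc_def
  proof (intro conjI allI impI)
    fix S' assume "S' \<subseteq> {..<length (v # xs) + length ys}" "gs ((v # xs) @ ys) S' = c"
    then show "S' = {length (v # xs)..<length (v # xs) + length ys}" using main by simp
  qed (use U v in \<open>auto simp: UPc_def\<close>)
qed


lemma remove_lemma:
  assumes U: "UPc (n + v) c xs ys" and vin: "v \<in> set xs"
  shows "\<exists>xs0. UPc n c xs0 ys \<and> length xs = Suc (length xs0)"
proof -
  obtain P R where xs: "xs = P @ v # R" using split_list[OF vin] by blast
  define h where "h i = (if i < length P then i else Suc i)" for i
  have L: "xs @ ys = (P @ v # R @ ys)" using xs by simp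
  have hL: "(P @ v # R @ ys) ! (h i) = (P @ R @ ys) ! i" for i
    by (cases "i < length P") (auto simp: h_def nth_append Suc_diff_le)
  have injh: "inj h" by (rule injI) (auto simp: h_def split: if_splits)
  let ?a0 = "length (P @ R)" and ?m0 = "length (P @ R) + length ys"
  have Uc: "\<And>S. S \<subseteq> {..<Suc ?m0} \<Longrightarrow> gs (P @ v # R @ ys) S = c \<Longrightarrow> S = {Suc ?a0..<Suc ?m0}"
    using U unfolding UPc_def L by (auto simp: xs)
  have main: "S = {?a0..<?m0}" if S: "S \<subseteq> {..<?m0}" "gs (P @ R @ ys) S = c" for S
  proof -
    have "gs (P @ v # R @ ys) (h ` S) = gs (P @ R @ ys) S"
      unfolding gs_def by (simp add: sum.reindex inj_on_subset[OF injh] hL)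
    then have g: "gs (P @ v # R @ ys) (h ` S) = c" using S by simp
    have "h ` S \<subseteq> {..<Suc ?m0}" using S by (auto simp: h_def)
    then have hS: "h ` S = {Suc ?a0..<Suc ?m0}" using Uc g by blast
    show ?thesis
    proof
      show "S \<subseteq> {?a0..<?m0}"
      proof
        fix i assume i: "i \<in> S"
        then have "h i \<in> {Suc ?a0..<Suc ?m0}" using hS by blast
        then have "?a0 \<le> i" by (auto simp: h_def split: if_splits)
        then show "i \<in> {?a0..<?m0}" using i S by auto
      qed
      show "{?a0..<?m0} \<subseteq> S"
      proof
        fix i assume i: "i \<in> {?a0..<?m0}"
        then have "h i = Suc i" by (auto simp: h_def)
        then have "h i \<in> h ` S" using hS i by auto
        then show "i \<in> S" using injh by (auto dest: injD)
      qed
    qed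
  qed
  have "UPc n c (P @ R) ys"
    unfolding UPc_def
  proof (intro conjI allI impI)
    fix S assume "S \<subseteq> {..<length (P @ R) + length ys}" "gs ((P @ R) @ ys) S = c"
    then show "S = {length (P @ R)..<length (P @ R) + length ys}" using main by simp
  qed (use U xs in \<open>auto simp: UPc_def\<close>)
  then show ?thesis using xs by auto
qed

lemma construction:
  assumes c: "0 < c" and v: "0 < v" and nd: "\<not> v dvd c" and n: "(c + 1) * v \<le> n"
  shows "UPc n c (((c + 1) * v + n mod v) # replicate (n div v - (c + 1)) v) [c]"
proof -
  define k where "k = n div v - (c + 1)"
  define B where "B = (c + 1) * v + n mod v"
  have q: "c + 1 \<le> n div v" using n v by (simp add: less_eq_div_iff_mult_less_eq)
  have sumx: "B + k * v = n"
  proof -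
    have "B + k * v = n mod v + ((c + 1) * v + k * v)" by (simp add: B_def)
    also have "\<dots> = n mod v + ((c + 1) + k) * v" by (simp add: add_mult_distrib)
    also have "(c + 1) + k = n div v" using q by (simp add: k_def)
    finally show ?thesis by simp
  qed
  have "(c + 1) * 1 \<le> (c + 1) * v" using v by (intro mult_le_mono2) simp
  then have Bc: "c < B" by (simp add: B_def)
  define L where "L = (B # replicate k v) @ [c]"
  have L0: "L ! 0 = B" by (simp add: L_def)
  have Lk: "L ! (Suc k) = c" by (simp add: L_def nth_append)
  have Lm: "L ! i = v" if "0 < i" "i \<le> k" for i
  proof -
    define j where "j = i - 1"
    have j: "i = Suc j" using that by (simp add: j_def)
    then have jk: "j < k" using that by simp
    have "L ! i = (replicate k v @ [c]) ! j" unfolding L_def j by simp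
    also have "\<dots> = replicate k v ! j" using jk by (simp add: nth_append)
    also have "\<dots> = v" using jk by simp
    finally show ?thesis .
  qed
  have main: "S = {Suc k..<Suc (Suc k)}" if S: "S \<subseteq> {..<Suc (Suc k)}" "gs L S = c" for S
  proof -
    have fS: "finite S" using S by (meson finite_lessThan finite_subset)
    have "0 \<notin> S"
    proof
      assume "0 \<in> S"
      then have "gs L {0} \<le> gs L S" using fS by (intro gs_mono) auto
      then show False using S Bc L0 by (simp add: gs_def)
    qed
    define T where "T = S - {Suc k}"
    have T: "\<And>i. i \<in> T \<Longrightarrow> L ! i = v"
    proof -
      fix i assume "i \<in> T"
      then have i: "i \<in> S" "i \<noteq> Suc k" by (auto simp: T_def)
      then have "i < Suc (Suc k)" using S by auto
      then have "0 < i" "i \<le> k" using i \<open>0 \<notin> S\<close> by (auto intro: gr0I)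
      then show "L ! i = v" by (rule Lm)
    qed
    have gT: "gs L T = v * card T" by (rule gs_const) (rule T)
    have fT: "finite T" using fS by (simp add: T_def)
    show ?thesis
    proof (cases "Suc k \<in> S")
      case True
      then have "S = insert (Suc k) T" by (auto simp: T_def)
      moreover have "Suc k \<notin> T" by (simp add: T_def)
      ultimately have "gs L S = c + gs L T" using fT Lk unfolding gs_def by simp
      then have "card T = 0" using S gT v by simp
      then have "T = {}" using fT by simp
      then show ?thesis using \<open>S = insert (Suc k) T\<close> by auto
    next
      case False
      then have "T = S" by (auto simp: T_def)
      then have "v * card T = c" using gT S by simp
      then have "v dvd c" using dvd_triv_left[of v "card T"] by simp
      then show ?thesis using nd by simp
    qed
  qed
  have "UPc n c (B # replicate k v) [c]"
    unfolding UPc_def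
  proof (intro conjI allI impI)
    fix S assume "S \<subseteq> {..<length (B # replicate k v) + length [c]}"
      "gs ((B # replicate k v) @ [c]) S = c"
    then show "S = {length (B # replicate k v)..<length (B # replicate k v) + length [c]}"
      using main unfolding L_def by simp
  qed (use v Bc c sumx in \<open>auto simp: sum_list_replicate\<close>)
  then show ?thesis by (simp add: B_def k_def)
qed

lemma structural:
  assumes U: "UPc n c xs ys" and c: "0 < c" and v: "0 < v"
    and dv: "\<And>d. 0 < d \<Longrightarrow> d < v \<Longrightarrow> d dvd c"
    and len: "n div v \<le> length xs + length ys + c"
    and big: "(v * c + 2 * c) + (v + v * (v * c + 2 * c)) + c + 1 \<le> n div v"
  shows "c + 1 \<le> card {i. i < length xs \<and> xs ! i = v}"
proof -
  let ?Lt = "{i. i < length xs \<and> xs ! i < v}"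
  let ?Eq = "{i. i < length xs \<and> xs ! i = v}"
  let ?Gt = "{i. i < length xs \<and> v < xs ! i}"
  define q where "q = n div v"
  define D where "D = v * c + 2 * c"
  define E where "E = card ?Eq"
  define H where "H = card ?Gt"
  have lt: "card ?Lt \<le> v * c" by (rule small_count[OF U c dv])
  have fin: "finite ?Lt" "finite ?Eq" "finite ?Gt" by auto
  have un: "{..<length xs} = ?Lt \<union> ?Eq \<union> ?Gt" by auto
  have d1: "?Lt \<inter> ?Eq = {}" "(?Lt \<union> ?Eq) \<inter> ?Gt = {}" by auto
  have "length xs = card (?Lt \<union> ?Eq \<union> ?Gt)" using un by (metis card_lessThan)
  also have "\<dots> = card ?Lt + card ?Eq + card ?Gt"
    using fin d1 by (simp add: card_Un_disjoint)
  finally have la: "length xs = card ?Lt + E + H" by (simp add: E_def H_def)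
  have ly: "length ys \<le> c"
    using U len_le[of ys] by (simp add: UPc_def)
  have "sum_list xs = gs (xs @ ys) {..<length xs}" by (simp add: gs_prefix)
  also have "\<dots> = gs (xs @ ys) ?Lt + gs (xs @ ys) ?Eq + gs (xs @ ys) ?Gt"
    unfolding gs_def un using fin d1 by (simp add: sum.union_disjoint)
  finally have ns: "n = gs (xs @ ys) ?Lt + gs (xs @ ys) ?Eq + gs (xs @ ys) ?Gt"
    using U by (simp add: UPc_def)
  have gE: "gs (xs @ ys) ?Eq = v * E" unfolding E_def by (rule gs_const) (auto simp: nth_append)
  have gH: "(v + 1) * H \<le> gs (xs @ ys) ?Gt"
    unfolding gs_def H_def using sum_bounded_below[of ?Gt "v + 1" "\<lambda>i. (xs @ ys) ! i"]
    by (simp add: nth_append mult.commute)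
  have A1: "v * E + v * H + H \<le> n" using ns gE gH by (simp add: algebra_simps)
  have A2: "n < v * q + v"
  proof -
    have "n = q * v + n mod v" by (simp add: q_def)
    moreover have "n mod v < v" using v by simp
    ultimately show ?thesis by (simp add: mult.commute)
  qed
  have A3: "q \<le> E + H + D" using len la lt ly unfolding q_def D_def by linarith
  have "v * q \<le> v * (E + H + D)" using A3 by (rule mult_le_mono2)
  then have A4: "v * q \<le> v * E + v * H + v * D" by (simp add: algebra_simps)
  have A5: "q \<ge> D + (v + v * D) + c + 1" using big unfolding q_def D_def by simp
  have "H < v + v * D" using A1 A2 A4 by linarith
  then show ?thesis using A3 A5 unfolding E_def by linarith
qed


lemma mup_facts:
  assumes "n \<noteq> c"
  shows "finite {length xs + length ys |xs ys. unique_partition n c xs ys}"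
    and "UPc n c xs ys \<Longrightarrow> length xs + length ys \<le> mup n c"
proof -
  have sub: "{length xs + length ys |xs ys. unique_partition n c xs ys} \<subseteq> {..n + c}"
  proof
    fix x assume "x \<in> {length xs + length ys |xs ys. unique_partition n c xs ys}"
    then obtain xs ys where "x = length xs + length ys" "UPc n c xs ys"
      using UP_iff[OF assms] by blast
    then show "x \<in> {..n + c}" using len_le[of xs] len_le[of ys] by (auto simp: UPc_def)
  qed
  then show fin: "finite {length xs + length ys |xs ys. unique_partition n c xs ys}"
    using finite_subset by blast
  assume "UPc n c xs ys"
  then have "length xs + length ys \<in> {length xs + length ys |xs ys. unique_partition n c xs ys}"
    using UP_iff[OF assms] by blast
  then show "length xs + length ys \<le> mup n c" unfolding mup_def using fin by (rule Max_ge[rotated])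
qed

lemma mup_attained:
  assumes "n \<noteq> c" and "UPc n c xs ys"
  shows "\<exists>xs ys. UPc n c xs ys \<and> length xs + length ys = mup n c"
proof -
  have ne: "{length xs + length ys |xs ys. unique_partition n c xs ys} \<noteq> {}"
    using assms UP_iff by blast
  have "mup n c \<in> {length xs + length ys |xs ys. unique_partition n c xs ys}"
    unfolding mup_def using mup_facts(1)[OF assms(1)] ne by (rule Max_in)
  then obtain xs ys where "mup n c = length xs + length ys" "unique_partition n c xs ys" by blast
  then show ?thesis using UP_iff[OF assms(1)] by metis
qed

lemma opt:
  assumes c: "0 < c" and v: "0 < v" and nd: "\<not> v dvd c"
    and dv: "\<And>d. 0 < d \<Longrightarrow> d < v \<Longrightarrow> d dvd c"
    and n: "((v * c + 2 * c) + (v + v * (v * c + 2 * c)) + c + 1 + c + 1) * v + c < n"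
  shows "\<exists>xs ys. UPc n c xs ys \<and> length xs + length ys = mup n c \<and>
           c + 1 \<le> card {i. i < length xs \<and> xs ! i = v}"
proof -
  define Q where "Q = (v * c + 2 * c) + (v + v * (v * c + 2 * c)) + c + 1"
  have nc: "n \<noteq> c" using n by simp
  have "(c + 1) * v \<le> (Q + c + 1) * v" by (intro mult_le_mono1) simp
  then have n1: "(c + 1) * v \<le> n" using n unfolding Q_def by linarith
  have "Q * v \<le> (Q + c + 1) * v" by (intro mult_le_mono1) simp
  then have "Q * v \<le> n" using n unfolding Q_def by linarith
  then have qQ: "Q \<le> n div v" using v by (simp add: less_eq_div_iff_mult_less_eq)
  have q1: "c + 1 \<le> n div v" using n1 v by (simp add: less_eq_div_iff_mult_less_eq)
  let ?xs = "((c + 1) * v + n mod v) # replicate (n div v - (c + 1)) v"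
  have UC: "UPc n c ?xs [c]" by (rule construction[OF c v nd n1])
  have "length ?xs + length [c] \<le> mup n c" by (rule mup_facts(2)[OF nc UC])
  then have lb: "n div v \<le> mup n c + c" using q1 by simp
  obtain xs ys where U: "UPc n c xs ys" and L: "length xs + length ys = mup n c"
    using mup_attained[OF nc UC] by blast
  have "c + 1 \<le> card {i. i < length xs \<and> xs ! i = v}"
    by (rule structural[OF U c v dv]) (use lb L qQ in \<open>simp_all add: Q_def\<close>)
  then show ?thesis using U L by blast
qed

theorem proposition3p3:
  fixes c :: nat
  assumes "0 < c"
  shows "\<exists>N::nat. \<forall>n::nat. n > N \<longrightarrow>
           mup (n + (LEAST k::nat. 0 < k \<and> \<not> k dvd c)) c = mup n c + 1"
proof -
  define v where "v = (LEAST k::nat. 0 < k \<and> \<not> k dvd c)"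
  have ex: "0 < c + 1 \<and> \<not> (c + 1) dvd c" using assms by (auto dest: dvd_imp_le)
  have vp: "0 < v \<and> \<not> v dvd c" unfolding v_def by (rule LeastI[where P="\<lambda>k. 0 < k \<and> \<not> k dvd c", OF ex])
  then have v: "0 < v" and nd: "\<not> v dvd c" by auto
  have dv: "d dvd c" if "0 < d" "d < v" for d
    using not_less_Least[of d "\<lambda>k. 0 < k \<and> \<not> k dvd c"] that unfolding v_def by blast
  define N where "N = ((v * c + 2 * c) + (v + v * (v * c + 2 * c)) + c + 1 + c + 1) * v + c"
  have "mup (n + v) c = mup n c + 1" if n: "N < n" for n
  proof -
    have nc: "n \<noteq> c" "n + v \<noteq> c" using n by (auto simp: N_def)
    obtain xs ys where U: "UPc n c xs ys" and L: "length xs + length ys = mup n c"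
      and C: "c + 1 \<le> card {i. i < length xs \<and> xs ! i = v}"
      using opt[OF assms v nd dv] n unfolding N_def by blast
    have "UPc (n + v) c (v # xs) ys" by (rule add_lemma[OF U v]) (use C in simp)
    then have "length (v # xs) + length ys \<le> mup (n + v) c" by (rule mup_facts(2)[OF nc(2)])
    then have le1: "mup n c + 1 \<le> mup (n + v) c" using L by simp
    obtain xs' ys' where U': "UPc (n + v) c xs' ys'" and L': "length xs' + length ys' = mup (n + v) c"
      and C': "c + 1 \<le> card {i. i < length xs' \<and> xs' ! i = v}"
      using opt[OF assms v nd dv, of "n + v"] n unfolding N_def by auto
    have "{i. i < length xs' \<and> xs' ! i = v} \<noteq> {}" using C' by (metis card.empty not_less_eq_eq le0 Suc_eq_plus1 le_zero_eq nat.distinct(1))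
    then obtain i where "i < length xs'" "xs' ! i = v" by auto
    then have "v \<in> set xs'" by (metis nth_mem)
    then obtain xs0 where U0: "UPc n c xs0 ys'" and l0: "length xs' = Suc (length xs0)"
      using remove_lemma[OF U'] by blast
    have "length xs0 + length ys' \<le> mup n c" by (rule mup_facts(2)[OF nc(1) U0])
    then have "mup (n + v) c \<le> mup n c + 1" using L' l0 by simp
    then show ?thesis using le1 by simp
  qed
  then show ?thesis unfolding v_def[symmetric] by blast
qed

end
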